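(* Consider a $(1+\varepsilon)$-adversarial sampling process (as in the context) on $k$ elements with $0<\varepsilon<1/2$ and initial weights normalized so that $\sum_{e\in E_0}w_0(e)=k$, against an arbitrary adversary. Then for every $\ell\in\{1,2,\ldots,\lfloor|S_0|/2\rfloor\}$, the probability that $\ell$ is bad is at most $e^{-\ell/40}$.
   Context: The $(1+\varepsilon)$-adversarial sampling process: initially there is a set $E_0$ of $k$ elements with nonnegative weights $w_0$. In round $i$, let $D_i$ be the distribution on $E_i$ with $\Pr_{D_i}(e)=w_i(e)/\sum_{e'\in E_i}w_i(e')$; an adversary chooses any distribution $D_i^\varepsilon$ on $E_i$ with $(1-\varepsilon)\Pr_{D_i}(e)\le\Pr_{D_i^\varepsilon}(e)\le(1+\varepsilon)\Pr_{D_i}(e)$ for all $e$; an element $e_{i+1}$ is sampled from $D_i^\varepsilon$ and $E_{i+1}=E_i\setminus\{e_{i+1}\}$; then the adversary chooses weights $0\le w_{i+1}(e)\le w_i(e)$ for $e\in E_{i+1}$. The adversary is a fixed strategy whose choices may depend on the history; probabilities are over the sampling. Notation: for $E\subseteq E_i$, $w_i(E)=\sum_{e\in E}w_i(e)$. For each $i$, partition $E_i=B_i\sqcup M_i\sqcup S_i$ where $e\in B_i$ iff $w_i(e)\ge 80$, $e\in M_i$ iff $2<w_i(e)<80$, and $e\in S_i$ iff $w_i(e)\le 2$. For $\ell\in\{1,\ldots,|S_0|\}$, $i_\ell$ is the smallest $i$ with $|S_i|=\ell$. An $\ell\in\{1,\ldots,\lfloor|S_0|/2\rfloor\}$ is called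 bad if both $w_{i_{2\ell}}(B_{i_{2\ell}})\le 8\ell$ and $w_{i_\ell}(B_{i_\ell})>4\ell$; otherwise it is good. *)

theory Defs
  imports Main "HOL-Library.Multiset" Complex_Main
begin

text \<open>A history is the list of elements sampled so
far. The (deterministic) adversary is given by two functions of the history:
  Dist h : the distribution D_i^eps chosen in round i = length h,
  Wt h   : the weights w_i (Wt [] = w_0; Wt (h @ [x]) is chosen after x is sampled).\<close>

definition valid_hist :: "'a set \<Rightarrow> 'a list \<Rightarrow> bool" where
  "valid_hist E0 h \<longleftrightarrow> distinct h \<and> set h \<subseteq> E0"

definition remaining :: "'a set \<Rightarrow> 'a list \<Rightarrow> 'a set" where
  "remaining E0 h = E0 - set h"

definition adversary ::
  "'a set \<Rightarrow> real \<Rightarrow> ('a \<Rightarrow> real) \<Rightarrow> ('a list \<Rightarrow> 'a \<Rightarrow> real) \<Rightarrow> ('a list \<Rightarrow> 'a \<Rightarrow> real) \<Rightarrow> bool"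
where
  "adversary E0 eps w0 Dist Wt \<longleftrightarrow>
     Wt [] = w0 \<and>
     (\<forall>h. valid_hist E0 h \<and> remaining E0 h \<noteq> {} \<longrightarrow>
        (\<forall>e\<in>remaining E0 h. 0 \<le> Dist h e) \<and>
        sum (Dist h) (remaining E0 h) = 1 \<and>
        (sum (Wt h) (remaining E0 h) > 0 \<longrightarrow>
          (\<forall>e\<in>remaining E0 h.
             (1 - eps) * (Wt h e / sum (Wt h) (remaining E0 h)) \<le> Dist h e \<and>
             Dist h e \<le> (1 + eps) * (Wt h e / sum (Wt h) (remaining E0 h))))) \<and>
     (\<forall>h x. valid_hist E0 h \<and> x \<in> remaining E0 h \<longrightarrow>
        (\<forall>e\<in>remaining E0 (h @ [x]). 0 \<le> Wt (h @ [x]) e \<and> Wt (h @ [x]) e \<le> Wt h e))"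

definition path_prob :: "('a list \<Rightarrow> 'a \<Rightarrow> real) \<Rightarrow> 'a list \<Rightarrow> real" where
  "path_prob Dist h = (\<Prod>i<length h. Dist (take i h) (h ! i))"

definition complete_runs :: "'a set \<Rightarrow> 'a list set" where
  "complete_runs E0 = {h. distinct h \<and> set h = E0}"

definition prob_event :: "'a set \<Rightarrow> ('a list \<Rightarrow> 'a \<Rightarrow> real) \<Rightarrow> ('a list \<Rightarrow> bool) \<Rightarrow> real" where
  "prob_event E0 Dist P = (\<Sum>h\<in>{h\<in>complete_runs E0. P h}. path_prob Dist h)"

text \<open>Along the run h: round i has E_i = E0 - set (take i h) and w_i = Wt (take i h).\<close>
definition S_set :: "'a set \<Rightarrow> ('a list \<Rightarrow> 'a \<Rightarrow> real) \<Rightarrow> 'a list \<Rightarrow> nat \<Rightarrow> 'a set" where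
  "S_set E0 Wt h i = {e \<in> E0 - set (take i h). Wt (take i h) e \<le> 2}"

definition B_set :: "'a set \<Rightarrow> ('a list \<Rightarrow> 'a \<Rightarrow> real) \<Rightarrow> 'a list \<Rightarrow> nat \<Rightarrow> 'a set" where
  "B_set E0 Wt h i = {e \<in> E0 - set (take i h). Wt (take i h) e \<ge> 80}"

definition first_idx :: "'a set \<Rightarrow> ('a list \<Rightarrow> 'a \<Rightarrow> real) \<Rightarrow> 'a list \<Rightarrow> nat \<Rightarrow> nat" where
  "first_idx E0 Wt h l = (LEAST i. card (S_set E0 Wt h i) = l)"

definition B_weight :: "'a set \<Rightarrow> ('a list \<Rightarrow> 'a \<Rightarrow> real) \<Rightarrow> 'a list \<Rightarrow> nat \<Rightarrow> real" where
  "B_weight E0 Wt h i = sum (Wt (take i h)) (B_set E0 Wt h i)"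

definition is_bad :: "'a set \<Rightarrow> ('a list \<Rightarrow> 'a \<Rightarrow> real) \<Rightarrow> 'a list \<Rightarrow> nat \<Rightarrow> bool" where
  "is_bad E0 Wt h l \<longleftrightarrow>
     B_weight E0 Wt h (first_idx E0 Wt h (2 * l)) \<le> 8 * real l \<and>
     B_weight E0 Wt h (first_idx E0 Wt h l) > 4 * real l"

end

theory Submission
  imports Defs "HOL-Combinatorics.Multiset_Permutations"
begin

lemma Q_bound:
  fixes Dist :: "'a list \<Rightarrow> 'a \<Rightarrow> real" and Phi :: "'a list \<Rightarrow> real"
  assumes fin: "finite E0"
    and nn: "\<And>p e. valid_hist E0 p \<Longrightarrow> e \<in> remaining E0 p \<Longrightarrow> 0 \<le> Dist p e"
    and step: "\<And>p. valid_hist E0 p \<Longrightarrow> remaining E0 p \<noteq> {} \<Longrightarrow>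
                 (\<Sum>x\<in>remaining E0 p. Dist p x * Phi (p @ [x])) \<le> Phi p"
    and termi: "\<And>p. valid_hist E0 p \<Longrightarrow> remaining E0 p = {} \<Longrightarrow> (if P p then 1 else 0) \<le> Phi p"
  shows "valid_hist E0 p \<Longrightarrow>
    (\<Sum>t\<in>permutations_of_set (remaining E0 p).
        (\<Prod>i<length t. Dist (p @ take i t) (t ! i)) * (if P (p @ t) then 1 else 0)) \<le> Phi p"
proof (induction "card (remaining E0 p)" arbitrary: p rule: less_induct)
  case less
  define R where "R = remaining E0 p"
  have finR: "finite R" using fin by (simp add: R_def remaining_def)
  show ?case
  proof (cases "R = {}")
    case True
    then show ?thesis using termi[OF less.prems] by (simp add: R_def)
  next
    case False
    define F where "F = (\<lambda>t. (\<Prod>i<length t. Dist (p @ take i t) (t ! i)) * (if P (p @ t) then 1 else (0::real)))"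
    have remx: "remaining E0 (p @ [x]) = R - {x}" for x by (auto simp: R_def remaining_def)
    have validx: "valid_hist E0 (p @ [x])" if "x \<in> R" for x
      using less.prems that by (auto simp: valid_hist_def R_def remaining_def)
    have "(\<Sum>t\<in>permutations_of_set R. F t) = (\<Sum>x\<in>R. \<Sum>t\<in>(\<lambda>xs. x # xs) ` permutations_of_set (R - {x}). F t)"
      unfolding permutations_of_set_nonempty[OF False]
      by (rule sum.UNION_disjoint) (auto simp: finR)
    also have "\<dots> = (\<Sum>x\<in>R. \<Sum>t\<in>permutations_of_set (R - {x}). F (x # t))"
      by (rule sum.cong[OF refl], subst sum.reindex) (auto simp: inj_on_def)
    also have "\<dots> = (\<Sum>x\<in>R. Dist p x * (\<Sum>t\<in>permutations_of_set (remaining E0 (p @ [x])).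
        (\<Prod>i<length t. Dist ((p @ [x]) @ take i t) (t ! i)) * (if P ((p @ [x]) @ t) then 1 else 0)))"
      unfolding remx sum_distrib_left
      by (rule sum.cong[OF refl], rule sum.cong[OF refl])
         (simp only: F_def length_Cons prod.lessThan_Suc_shift, simp)
    also have "\<dots> \<le> (\<Sum>x\<in>R. Dist p x * Phi (p @ [x]))"
    proof (rule sum_mono, rule mult_left_mono)
      fix x assume x: "x \<in> R"
      have "card (remaining E0 (p @ [x])) < card (remaining E0 p)"
        unfolding remx R_def[symmetric] using x finR by (meson card_Diff1_less)
      then show "(\<Sum>t\<in>permutations_of_set (remaining E0 (p @ [x])).
        (\<Prod>i<length t. Dist ((p @ [x]) @ take i t) (t ! i)) * (if P ((p @ [x]) @ t) then 1 else 0)) \<le> Phi (p @ [x])"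
        using less.hyps validx[OF x] by blast
      show "0 \<le> Dist p x" using nn less.prems x by (simp add: R_def)
    qed
    also have "\<dots> \<le> Phi p" using step less.prems False by (simp add: R_def)
    finally show ?thesis by (simp add: F_def R_def)
  qed
qed

lemma numeric: "(5/6::real)^n * exp (real n/10) \<le> exp (- real n / 40)"
proof -
  have e: "exp (1/8::real) \<le> 6/5"
  proof (rule ccontr)
    assume "\<not> ?thesis"
    then have "(6/5::real)^8 < exp (1/8) ^ 8" by (intro power_strict_mono) auto
    also have "exp (1/8::real) ^ 8 = exp 1" by (simp add: exp_of_nat_mult[symmetric])
    moreover have "(6/5::real)^8 = 1679616/390625" by (simp add: power_divide)
    ultimately show False using exp_le by simp
  qed
  have "(5/6::real)^n * exp (real n/10) * exp (real n / 40) = ((5/6) * exp (1/8)) ^ n"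
    by (simp add: exp_add[symmetric] power_mult_distrib exp_of_nat_mult[symmetric] field_simps)
  also have "\<dots> \<le> 1" using e by (intro power_le_one) auto
  finally show ?thesis by (simp add: exp_minus field_simps)
qed



lemma ivt_nat:
  fixes f :: "nat \<Rightarrow> nat"
  assumes st: "\<And>j. f j \<le> f (Suc j) + 1" and "m \<le> f 0" and "f n \<le> m"
  shows "\<exists>j\<le>n. f j = m"
  using assms(3)
proof (induction n)
  case 0 then show ?case using assms(2) by auto
next
  case (Suc n)
  show ?case
  proof (cases "f n \<le> m")
    case True then show ?thesis using Suc.IH by (meson le_SucI)
  next
    case False then have "f (Suc n) = m" using st[of n] Suc.prems by linarith
    then show ?thesis by blast
  qed
qed

locale LS =
  fixes E0 :: "'a set" and eps :: real and w0 :: "'a \<Rightarrow> real"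
    and Dist Wt :: "'a list \<Rightarrow> 'a \<Rightarrow> real" and l :: nat
  assumes fin: "finite E0"
    and eps0: "0 < eps" and eps1: "eps < 1/2"
    and w0nn: "\<forall>e\<in>E0. 0 \<le> w0 e"
    and adv: "adversary E0 eps w0 Dist Wt"
    and l1: "1 \<le> l" and l2: "l \<le> card {e\<in>E0. w0 e \<le> 2} div 2"
begin

abbreviation "valid h \<equiv> valid_hist E0 h"
abbreviation "rem h \<equiv> remaining E0 h"
abbreviation "SS h j \<equiv> S_set E0 Wt h j"
abbreviation "BS h j \<equiv> B_set E0 Wt h j"
abbreviation "BW h j \<equiv> B_weight E0 Wt h j"
abbreviation "fi h m \<equiv> first_idx E0 Wt h m"

lemma Wt0: "Wt [] = w0" using adv unfolding adversary_def by blast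

lemma D_nn: "valid h \<Longrightarrow> e \<in> rem h \<Longrightarrow> 0 \<le> Dist h e"
  using adv unfolding adversary_def by blast

lemma D_sum: "valid h \<Longrightarrow> rem h \<noteq> {} \<Longrightarrow> sum (Dist h) (rem h) = 1"
  using adv unfolding adversary_def by blast

lemma D_bnd: "valid h \<Longrightarrow> e \<in> rem h \<Longrightarrow> sum (Wt h) (rem h) > 0 \<Longrightarrow>
   (1 - eps) * (Wt h e / sum (Wt h) (rem h)) \<le> Dist h e \<and>
   Dist h e \<le> (1 + eps) * (Wt h e / sum (Wt h) (rem h))"
  using adv unfolding adversary_def by blast

lemma Wt_step: "valid h \<Longrightarrow> x \<in> rem h \<Longrightarrow> e \<in> rem (h @ [x]) \<Longrightarrow>
   0 \<le> Wt (h @ [x]) e \<and> Wt (h @ [x]) e \<le> Wt h e"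
  using adv unfolding adversary_def by blast

lemma valid_snoc: "valid h \<Longrightarrow> x \<in> rem h \<Longrightarrow> valid (h @ [x])"
  by (auto simp: valid_hist_def remaining_def)

lemma rem_snoc: "rem (h @ [x]) = rem h - {x}"
  by (auto simp: remaining_def)

lemma valid_take: "valid h \<Longrightarrow> valid (take j h)"
  by (auto simp: valid_hist_def dest: in_set_takeD)

lemma valid_butlast: "valid (h @ [x]) \<Longrightarrow> valid h \<and> x \<in> rem h"
  by (auto simp: valid_hist_def remaining_def)

lemma Wt_nn: "valid h \<Longrightarrow> e \<in> rem h \<Longrightarrow> 0 \<le> Wt h e"
proof (induction h arbitrary: e rule: rev_induct)
  case Nil then show ?case using w0nn Wt0 by (simp add: remaining_def)
next
  case (snoc x xs)
  then show ?case using Wt_step valid_butlast by blast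
qed

lemma nth_rem: "valid h \<Longrightarrow> j < length h \<Longrightarrow> h ! j \<in> rem (take j h)"
proof -
  assume v: "valid h" and j: "j < length h"
  have "h ! j \<in> E0" using v j by (auto simp: valid_hist_def)
  moreover have "h ! j \<notin> set (take j h)"
  proof
    assume "h ! j \<in> set (take j h)"
    then obtain i where "i < j" "take j h ! i = h ! j" by (auto simp: in_set_conv_nth)
    then have "h ! i = h ! j" "i < j" by auto
    then show False using v j by (simp add: valid_hist_def nth_eq_iff_index_eq)
  qed
  ultimately show ?thesis by (simp add: remaining_def)
qed

lemma SS_fin: "finite (SS h j)" using fin by (simp add: S_set_def)
lemma SS_sub: "SS h j \<subseteq> rem (take j h)" by (auto simp: S_set_def remaining_def)
lemma BS_sub: "BS h j \<subseteq> rem (take j h)" by (auto simp: B_set_def remaining_def)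
lemma BS_fin: "finite (BS h j)" using fin by (simp add: B_set_def)

lemma SS_snoc: "valid h \<Longrightarrow> x \<in> rem h \<Longrightarrow> SS h (length h) - {x} \<subseteq> SS (h @ [x]) (Suc (length h))"
proof
  fix e assume v: "valid h" and x: "x \<in> rem h" and e: "e \<in> SS h (length h) - {x}"
  then have e1: "e \<in> rem (h @ [x])" "Wt h e \<le> 2"
    by (auto simp: S_set_def remaining_def)
  then have "Wt (h @ [x]) e \<le> 2" using Wt_step[OF v x e1(1)] by linarith
  then show "e \<in> SS (h @ [x]) (Suc (length h))" using e1 by (auto simp: S_set_def remaining_def)
qed

lemma BS_snoc: "valid h \<Longrightarrow> x \<in> rem h \<Longrightarrow> BS (h @ [x]) (Suc (length h)) \<subseteq> BS h (length h) - {x}"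
proof
  fix e assume v: "valid h" and x: "x \<in> rem h" and e: "e \<in> BS (h @ [x]) (Suc (length h))"
  then have e1: "e \<in> rem (h @ [x])" "Wt (h @ [x]) e \<ge> 80"
    by (auto simp: B_set_def remaining_def)
  then have "Wt h e \<ge> 80" using Wt_step[OF v x e1(1)] by linarith
  then show "e \<in> BS h (length h) - {x}" using e1 by (auto simp: B_set_def remaining_def)
qed

lemma BW_snoc: assumes v: "valid h" and x: "x \<in> rem h"
  shows "BW (h @ [x]) (Suc (length h)) \<le> BW h (length h) - (if x \<in> BS h (length h) then 80 else 0)"
proof -
  have "BW (h @ [x]) (Suc (length h)) = sum (Wt (h @ [x])) (BS (h @ [x]) (Suc (length h)))"
    by (simp add: B_weight_def)
  also have "\<dots> \<le> sum (Wt h) (BS (h @ [x]) (Suc (length h)))"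
    apply (rule sum_mono)
    using Wt_step[OF v x] BS_sub[of "h @ [x]" "Suc (length h)"] by auto
  also have "\<dots> \<le> sum (Wt h) (BS h (length h) - {x})"
    apply (rule sum_mono2)
    using BS_snoc[OF v x] BS_fin BS_sub[of h "length h"] Wt_nn[OF v] by auto
  also have "\<dots> = BW h (length h) - (if x \<in> BS h (length h) then Wt h x else 0)"
    by (simp add: sum_diff1 BS_fin B_weight_def)
  also have "\<dots> \<le> BW h (length h) - (if x \<in> BS h (length h) then 80 else 0)"
    by (auto simp: B_set_def)
  finally show ?thesis .
qed

lemma SS_take: "SS h j = SS (take j h) j" by (simp add: S_set_def)

lemma card_step: assumes v: "valid h" shows "card (SS h j) \<le> card (SS h (Suc j)) + 1"
proof (cases "j < length h")
  case True
  define q where "q = take j h"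
  have q: "valid q" "h ! j \<in> rem q" "length q = j" using True v nth_rem valid_take
    by (auto simp: q_def)
  have tk: "take (Suc j) h = q @ [h ! j]" using True by (simp add: q_def take_Suc_conv_app_nth)
  have e1: "SS h j = SS q (length q)" using q(3) by (simp add: S_set_def q_def)
  have e2: "SS h (Suc j) = SS (q @ [h ! j]) (Suc (length q))" using q(3) tk by (simp add: S_set_def)
  have "card (SS h j) \<le> card (SS h j - {h ! j}) + 1"
    using SS_fin[of h j] by (simp add: card_Diff_singleton_if) linarith
  also have "\<dots> \<le> card (SS h (Suc j)) + 1"
    using card_mono[OF SS_fin SS_snoc[OF q(1) q(2)]] e1 e2 by simp
  finally show ?thesis .
next
  case False
  then show ?thesis by (simp add: S_set_def)
qed

lemma SS0: "SS h 0 = {e\<in>E0. w0 e \<le> 2}" by (simp add: S_set_def Wt0)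
lemma card_SS0: "2 * l \<le> card (SS h 0)" using l2 SS0 by simp

lemma SS_const: "length h \<le> j \<Longrightarrow> SS h j = SS h (length h)" by (simp add: S_set_def)
lemma BW_const: "length h \<le> j \<Longrightarrow> BW h j = BW h (length h)" by (simp add: B_set_def B_weight_def)
lemma SS_pre: "j \<le> length h \<Longrightarrow> SS (h @ [x]) j = SS h j" by (simp add: S_set_def)
lemma BW_pre: "j \<le> length h \<Longrightarrow> BW (h @ [x]) j = BW h j" by (simp add: B_set_def B_weight_def)

definition reached :: "'a list \<Rightarrow> nat \<Rightarrow> bool" where
  "reached h m \<longleftrightarrow> (\<exists>j. card (SS h j) = m)"

lemma fi_prop: "reached h m \<Longrightarrow> fi h m \<le> length h \<and> card (SS h (fi h m)) = m"
proof -
  assume "reached h m"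
  then obtain j where j: "card (SS h j) = m" by (auto simp: reached_def)
  define j' where "j' = min j (length h)"
  have "card (SS h j') = m" using j SS_const[of h j] by (cases "j \<le> length h") (auto simp: j'_def)
  then have "fi h m \<le> j'" unfolding first_idx_def by (rule Least_le)
  moreover have "card (SS h (fi h m)) = m" unfolding first_idx_def by (rule LeastI) fact
  ultimately show ?thesis by (simp add: j'_def)
qed

lemma fi_snoc: assumes "reached h m" shows "fi (h @ [x]) m = fi h m"
proof -
  have p: "fi h m \<le> length h" "card (SS h (fi h m)) = m" using fi_prop[OF assms] by auto
  show ?thesis unfolding first_idx_def[of E0 Wt "h @ [x]"]
  proof (rule Least_equality)
    show "card (SS (h @ [x]) (fi h m)) = m" using p SS_pre by simp
  next
    fix y assume y: "card (SS (h @ [x]) y) = m"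
    show "fi h m \<le> y"
    proof (rule ccontr)
      assume "\<not> ?thesis"
      then have "y < fi h m" by simp
      then have "card (SS h y) = m" using y p SS_pre[of y h x] by simp
      then show False using \<open>y < fi h m\<close> not_less_Least[of y "\<lambda>i. card (SS h i) = m"]
        unfolding first_idx_def by blast
    qed
  qed
qed

lemma reached_snoc: "reached h m \<Longrightarrow> reached (h @ [x]) m"
proof -
  assume r: "reached h m"
  have "card (SS (h @ [x]) (fi h m)) = m" using fi_prop[OF r] SS_pre[of "fi h m" h x] by simp
  then show ?thesis unfolding reached_def by blast
qed

lemma not_reached: "valid h \<Longrightarrow> \<not> reached h m \<Longrightarrow> m \<le> 2 * l \<Longrightarrow> m < card (SS h j)"
proof (rule ccontr)
  assume v: "valid h" and nr: "\<not> reached h m" and m: "m \<le> 2 * l" and c: "\<not> m < card (SS h j)"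
  have "\<exists>i\<le>j. card (SS h i) = m"
    by (rule ivt_nat[where f = "\<lambda>i. card (SS h i)"]) (use card_step[OF v] card_SS0[of h] m c in auto)
  then show False using nr by (auto simp: reached_def)
qed

lemma reached_l_2l: "valid h \<Longrightarrow> reached h l \<Longrightarrow> reached h (2 * l)"
proof (rule ccontr)
  assume v: "valid h" and r: "reached h l" and n: "\<not> reached h (2 * l)"
  have "2 * l < card (SS h (fi h l))" using not_reached[OF v n] by simp
  then show False using fi_prop[OF r] l1 by simp
qed

end


context LS begin

definition Phi :: "'a list \<Rightarrow> real" where
  "Phi h = (if reached h l then (if is_bad E0 Wt h l then 1 else 0)
     else if reached h (2 * l) then
       (if 4 * real l < BW h (length h) \<and> BW h (fi h (2 * l)) \<le> 8 * real l
        then (5/6::real) ^ (min (card (SS h (length h))) (2 * l) - l) * exp ((BW h (length h) - 4 * real l) / 40)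
        else 0)
     else exp (- real l / 40))"

lemma is_bad_snoc: assumes v: "valid h" and r: "reached h l"
  shows "is_bad E0 Wt (h @ [x]) l = is_bad E0 Wt h l"
proof -
  have r2: "reached h (2 * l)" using reached_l_2l[OF v r] .
  show ?thesis unfolding is_bad_def fi_snoc[OF r] fi_snoc[OF r2]
    using BW_pre[of "fi h l" h x] BW_pre[of "fi h (2*l)" h x] fi_prop[OF r] fi_prop[OF r2] by simp
qed

lemma Phi_term: assumes v: "valid h" and e: "rem h = {}"
  shows "(if is_bad E0 Wt h l then 1 else 0) \<le> Phi h"
proof -
  have "SS h (length h) = {}" using SS_sub[of h "length h"] e by simp
  then have "reached h l"
    using not_reached[OF v, of l] l1 by (metis card.empty not_less0 le_add2 mult_2)
  then show ?thesis by (simp add: Phi_def)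
qed

lemma Phi_init: "Phi [] \<le> exp (- real l / 40)"
proof -
  have c: "SS [] j = SS [] 0" for j using SS_const[of "[]" j] by simp
  have c0: "2 * l \<le> card (SS [] 0)" using card_SS0 .
  have "card (SS [] j) \<noteq> l" for j
  proof -
    have "card (SS [] j) \<ge> 2 * l" using c[of j] c0 by simp
    then show ?thesis using l1 by linarith
  qed
  then have nr: "\<not> reached [] l" unfolding reached_def by blast
  show ?thesis
  proof (cases "reached [] (2 * l)")
    case False then show ?thesis using nr by (simp add: Phi_def)
  next
    case True
    have f: "fi [] (2 * l) = 0" using fi_prop[OF True] by simp
    have cc: "card (SS [] 0) = 2 * l" using fi_prop[OF True] f by simp
    have "(5/6::real) ^ (min (2 * l) (2 * l) - l) * exp ((BW [] 0 - 4 * real l) / 40) \<le> exp (- real l / 40)"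
      if "BW [] 0 \<le> 8 * real l"
    proof -
      have "exp ((BW [] 0 - 4 * real l) / 40) \<le> exp (real l / 10)" using that by simp
      then have "(5/6::real) ^ l * exp ((BW [] 0 - 4 * real l) / 40) \<le> (5/6) ^ l * exp (real l / 10)"
        by (intro mult_left_mono) auto
      also have "\<dots> \<le> exp (- real l / 40)" by (rule numeric)
      finally show ?thesis by simp
    qed
    then show ?thesis using nr True f cc by (simp add: Phi_def)
  qed
qed

end


context LS begin

lemma card_snoc_ge: assumes v: "valid h" and x: "x \<in> rem h"
  shows "card (SS h (length h)) \<le> card (SS (h @ [x]) (Suc (length h))) + (if x \<in> SS h (length h) then 1 else 0)"
proof -
  have "card (SS h (length h) - {x}) \<le> card (SS (h @ [x]) (Suc (length h)))"
    by (rule card_mono[OF SS_fin SS_snoc[OF v x]])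
  then show ?thesis using SS_fin[of h "length h"] by (auto simp: card_Diff_singleton_if)
qed

lemma Phi_caseB: assumes v: "valid h" and x: "x \<in> rem h" and n2: "\<not> reached h (2 * l)"
  shows "Phi (h @ [x]) \<le> exp (- real l / 40)"
proof -
  let ?n = "length h"
  have gt: "2 * l < card (SS h j)" for j using not_reached[OF v n2] by simp
  have s': "2 * l \<le> card (SS (h @ [x]) (Suc ?n))"
    using card_snoc_ge[OF v x] gt[of ?n] by (auto split: if_splits)
  have cge: "2 * l \<le> card (SS (h @ [x]) j)" for j
  proof (cases "j \<le> ?n")
    case True then show ?thesis using SS_pre[OF True, of x] gt[of j] by simp
  next
    case False then show ?thesis using SS_const[of "h @ [x]" j] s' by simp
  qed
  have nr: "\<not> reached (h @ [x]) l"
  proof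
    assume "reached (h @ [x]) l"
    then obtain j where "card (SS (h @ [x]) j) = l" by (auto simp: reached_def)
    then show False using cge[of j] l1 by linarith
  qed
  show ?thesis
  proof (cases "reached (h @ [x]) (2 * l)")
    case False then show ?thesis using nr by (simp add: Phi_def)
  next
    case True
    have fp: "fi (h @ [x]) (2 * l) \<le> Suc ?n" "card (SS (h @ [x]) (fi (h @ [x]) (2 * l))) = 2 * l"
      using fi_prop[OF True] by auto
    have f: "fi (h @ [x]) (2 * l) = Suc ?n"
    proof (rule ccontr)
      assume "fi (h @ [x]) (2 * l) \<noteq> Suc ?n"
      then have le: "fi (h @ [x]) (2 * l) \<le> ?n" using fp by simp
      then show False using fp(2) SS_pre[OF le, of x] gt[of "fi (h @ [x]) (2 * l)"] by simp
    qed
    have cc: "card (SS (h @ [x]) (Suc ?n)) = 2 * l" using fp f by simp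
    have "(5/6::real) ^ (min (2 * l) (2 * l) - l) * exp ((BW (h @ [x]) (Suc ?n) - 4 * real l) / 40) \<le> exp (- real l / 40)"
      if "BW (h @ [x]) (Suc ?n) \<le> 8 * real l"
    proof -
      have "exp ((BW (h @ [x]) (Suc ?n) - 4 * real l) / 40) \<le> exp (real l / 10)" using that by simp
      then have "(5/6::real) ^ l * exp ((BW (h @ [x]) (Suc ?n) - 4 * real l) / 40) \<le> (5/6) ^ l * exp (real l / 10)"
        by (intro mult_left_mono) auto
      also have "\<dots> \<le> exp (- real l / 40)" by (rule numeric)
      finally show ?thesis by simp
    qed
    then show ?thesis using nr True f cc by (simp add: Phi_def)
  qed
qed

end


context LS begin

lemma Phi_caseC_pt: assumes v: "valid h" and x: "x \<in> rem h"
  and r2: "reached h (2 * l)" and nr: "\<not> reached h l"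
  shows "Phi (h @ [x]) \<le> (if 4 * real l < BW h (length h) \<and> BW h (fi h (2 * l)) \<le> 8 * real l
     then (5/6::real) ^ (min (card (SS (h @ [x]) (Suc (length h)))) (2 * l) - l)
          * exp ((BW (h @ [x]) (Suc (length h)) - 4 * real l) / 40) else 0)"
proof -
  let ?n = "length h"
  let ?b = "BW h ?n" and ?b' = "BW (h @ [x]) (Suc ?n)" and ?b2 = "BW h (fi h (2 * l))"
  let ?s' = "card (SS (h @ [x]) (Suc ?n))"
  have gt: "l < card (SS h j)" for j using not_reached[OF v nr] by simp
  have bb: "?b' \<le> ?b" using BW_snoc[OF v x] by (auto split: if_splits)
  have fe: "fi (h @ [x]) (2 * l) = fi h (2 * l)" using fi_snoc[OF r2] .
  have b2e: "BW (h @ [x]) (fi h (2 * l)) = ?b2" using BW_pre fi_prop[OF r2] by simp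
  have len: "length (h @ [x]) = Suc ?n" by simp
  have rx2: "reached (h @ [x]) (2 * l)" using reached_snoc[OF r2] .
  show ?thesis
  proof (cases "reached (h @ [x]) l")
    case True
    have fp: "fi (h @ [x]) l \<le> Suc ?n" "card (SS (h @ [x]) (fi (h @ [x]) l)) = l"
      using fi_prop[OF True] by auto
    have f: "fi (h @ [x]) l = Suc ?n"
    proof (rule ccontr)
      assume "fi (h @ [x]) l \<noteq> Suc ?n"
      then have le: "fi (h @ [x]) l \<le> ?n" using fp by simp
      then show False using fp(2) SS_pre[OF le, of x] gt[of "fi (h @ [x]) l"] by simp
    qed
    have s': "?s' = l" using fp f by simp
    show ?thesis
    proof (cases "is_bad E0 Wt (h @ [x]) l")
      case True
      then have bad: "?b2 \<le> 8 * real l" "4 * real l < ?b'"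
        unfolding is_bad_def fe f b2e by auto
      then have "1 \<le> exp ((?b' - 4 * real l) / 40)" by simp
      then show ?thesis using bad bb True \<open>reached (h @ [x]) l\<close> s' by (simp add: Phi_def)
    next
      case False
      then show ?thesis using \<open>reached (h @ [x]) l\<close> by (simp add: Phi_def)
    qed
  next
    case False
    then show ?thesis using rx2 fe b2e bb by (auto simp add: Phi_def)
  qed
qed

end


context LS begin

lemma Phi_caseC: assumes v: "valid h" and ne: "rem h \<noteq> {}"
  and r2: "reached h (2 * l)" and nr: "\<not> reached h l"
  shows "(\<Sum>x\<in>rem h. Dist h x * Phi (h @ [x])) \<le> Phi h"
proof -
  let ?n = "length h"
  define b where "b = BW h ?n"
  define b2 where "b2 = BW h (fi h (2 * l))"
  define s where "s = card (SS h ?n)"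
  define Sn where "Sn = SS h ?n"
  define Bn where "Bn = BS h ?n"
  define R where "R = rem h"
  have finR: "finite R" using fin by (simp add: R_def remaining_def)
  have SnR: "Sn \<subseteq> R" using SS_sub[of h ?n] by (simp add: Sn_def R_def)
  have BnR: "Bn \<subseteq> R" using BS_sub[of h ?n] by (simp add: Bn_def R_def)
  have gt: "l < s" using not_reached[OF v nr] by (simp add: s_def)
  have Dnn: "x \<in> R \<Longrightarrow> 0 \<le> Dist h x" for x using D_nn[OF v] by (simp add: R_def)
  have pt: "Phi (h @ [x]) \<le> (if 4 * real l < b \<and> b2 \<le> 8 * real l
     then (5/6::real) ^ (min (card (SS (h @ [x]) (Suc ?n))) (2 * l) - l)
          * exp ((BW (h @ [x]) (Suc ?n) - 4 * real l) / 40) else 0)" if "x \<in> R" for x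
    using Phi_caseC_pt[OF v _ r2 nr, of x] that by (simp add: b_def b2_def R_def)
  have Phih: "Phi h = (if 4 * real l < b \<and> b2 \<le> 8 * real l
        then (5/6::real) ^ (min s (2 * l) - l) * exp ((b - 4 * real l) / 40) else 0)"
    using r2 nr by (simp add: Phi_def b_def b2_def s_def)
  show ?thesis
  proof (cases "4 * real l < b \<and> b2 \<le> 8 * real l")
    case False
    have "(\<Sum>x\<in>R. Dist h x * Phi (h @ [x])) \<le> (\<Sum>x\<in>R. 0)"
      by (rule sum_mono) (use pt False Dnn in \<open>auto intro: mult_nonneg_nonpos\<close>)
    then show ?thesis using Phih False by (simp add: R_def)
  next
    case True
    define G where "G = (5/6::real) ^ (min s (2 * l) - l)"
    define E where "E = exp ((b - 4 * real l) / 40)"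
    define c1 where "c1 = (if s \<le> 2 * l then 1/5 else (0::real))"
    define c2 where "c2 = 1 - exp (-2::real)"
    define f where "f = (\<lambda>x. 1 + (if x \<in> Sn then c1 else 0) - (if x \<in> Bn then c2 else 0))"
    have G0: "0 \<le> G" "0 \<le> E" by (auto simp: G_def E_def)
    have disj: "x \<in> Sn \<Longrightarrow> x \<notin> Bn" for x by (auto simp: Sn_def Bn_def S_set_def B_set_def)
    have ptb: "Phi (h @ [x]) \<le> G * E * f x" if xR: "x \<in> R" for x
    proof -
      let ?s' = "card (SS (h @ [x]) (Suc ?n))"
      let ?b' = "BW (h @ [x]) (Suc ?n)"
      have x: "x \<in> rem h" using xR by (simp add: R_def)
      have cs: "s \<le> ?s' + (if x \<in> Sn then 1 else 0)" using card_snoc_ge[OF v x] by (simp add: s_def Sn_def)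
      have g: "(5/6::real) ^ (min ?s' (2 * l) - l) \<le> G * (if x \<in> Sn \<and> s \<le> 2 * l then 6/5 else 1)"
      proof (cases "x \<in> Sn \<and> s \<le> 2 * l")
        case True
        have "(5/6::real) ^ (min ?s' (2 * l) - l) \<le> (5/6) ^ (s - 1 - l)"
          by (rule power_decreasing) (use cs True gt in auto)
        also have "\<dots> = G * (6/5)"
        proof -
          have "s - l = Suc (s - 1 - l)" using gt by simp
          then show ?thesis using True by (simp add: G_def)
        qed
        finally show ?thesis using True by simp
      next
        case False
        have "(5/6::real) ^ (min ?s' (2 * l) - l) \<le> G" unfolding G_def
          by (rule power_decreasing) (use cs False gt in \<open>auto split: if_splits\<close>)
        then show ?thesis by (subst if_not_P[OF False]) simp
      qed
      have bw: "?b' \<le> b - (if x \<in> Bn then 80 else 0)" using BW_snoc[OF v x] by (simp add: b_def Bn_def)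
      have e: "exp ((?b' - 4 * real l) / 40) \<le> E * (if x \<in> Bn then exp (-2) else 1)"
      proof (cases "x \<in> Bn")
        case True
        have "(?b' - 4 * real l) / 40 \<le> (b - 4 * real l) / 40 + (-2)" using bw True by (simp add: field_simps)
        then have "exp ((?b' - 4 * real l) / 40) \<le> exp ((b - 4 * real l) / 40 + (-2))" by simp
        also have "\<dots> = E * exp (-2)" unfolding E_def by (rule exp_add)
        finally show ?thesis by (simp only: if_P[OF True])
      next
        case False then show ?thesis using bw by (simp add: E_def)
      qed
      have "Phi (h @ [x]) \<le> (5/6::real) ^ (min ?s' (2 * l) - l) * exp ((?b' - 4 * real l) / 40)"
        using pt[OF xR] True by simp
      also have "\<dots> \<le> (G * (if x \<in> Sn \<and> s \<le> 2 * l then 6/5 else 1)) * (E * (if x \<in> Bn then exp (-2) else 1))"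
        by (rule mult_mono[OF g e]) (use G0 in auto)
      also have "\<dots> = G * E * f x"
        using disj[of x] by (auto simp: f_def c1_def c2_def)
      finally show ?thesis .
    qed
    have W0: "b \<le> sum (Wt h) R"
      unfolding b_def B_weight_def take_all[OF order_refl] Bn_def[symmetric]
      by (rule sum_mono2[OF finR]) (use BnR Wt_nn[OF v] in \<open>auto simp: Bn_def R_def\<close>)
    define W where "W = sum (Wt h) R"
    have Wpos: "0 < W" using W0 True l1 by (simp add: W_def)
    have Db: "x \<in> R \<Longrightarrow> (1 - eps) * (Wt h x / W) \<le> Dist h x \<and> Dist h x \<le> (1 + eps) * (Wt h x / W)" for x
      using D_bnd[OF v, of x] Wpos by (simp add: W_def R_def)
    have DB: "2 * real l / W \<le> sum (Dist h) Bn"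
    proof -
      have "(\<Sum>x\<in>Bn. (1 - eps) * (Wt h x / W)) \<le> sum (Dist h) Bn"
        by (rule sum_mono) (use Db BnR in auto)
      moreover have "(\<Sum>x\<in>Bn. (1 - eps) * (Wt h x / W)) = (1 - eps) * b / W"
        by (simp add: sum_distrib_left[symmetric] sum_divide_distrib[symmetric] b_def B_weight_def Bn_def)
      moreover have "2 * real l / W \<le> (1 - eps) * b / W"
      proof -
        have "(1/2) * b \<le> (1 - eps) * b" using True eps1
          by (intro mult_right_mono) auto
        then have "2 * real l \<le> (1 - eps) * b" using True by linarith
        then show ?thesis using Wpos by (simp add: divide_right_mono)
      qed
      ultimately show ?thesis by linarith
    qed
    have DS: "sum (Dist h) Sn \<le> 3 * real s / W"
    proof -
      have "sum (Dist h) Sn \<le> (\<Sum>x\<in>Sn. (1 + eps) * (Wt h x / W))"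
        by (rule sum_mono) (use Db SnR in auto)
      also have "\<dots> \<le> (\<Sum>x\<in>Sn. 3 / W)"
      proof (rule sum_mono)
        fix x assume xs: "x \<in> Sn"
        then have "Wt h x \<le> 2" "0 \<le> Wt h x" using Wt_nn[OF v] SnR
          by (auto simp: Sn_def S_set_def R_def)
        then have "(1 + eps) * Wt h x \<le> (3/2) * 2" using eps0 eps1 by (intro mult_mono) auto
        then have "(1 + eps) * Wt h x \<le> 3" by simp
        then have "((1 + eps) * Wt h x) / W \<le> 3 / W" using Wpos
          by (intro divide_right_mono) auto
        then show "(1 + eps) * (Wt h x / W) \<le> 3 / W" by simp
      qed
      also have "\<dots> = 3 * real s / W" by (simp add: s_def Sn_def)
      finally show ?thesis .
    qed
    have c2b: "3/5 \<le> c2"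
    proof -
      have "3 \<le> exp (2::real)" using exp_ge_add_one_self[of 2] by simp
      then have "exp (-2::real) \<le> 1/3" by (simp add: exp_minus field_simps)
      then show ?thesis by (simp add: c2_def)
    qed
    have key: "c1 * sum (Dist h) Sn \<le> c2 * sum (Dist h) Bn"
    proof -
      have DBn: "0 \<le> sum (Dist h) Bn" using Dnn BnR by (meson subsetD sum_nonneg)
      show ?thesis
      proof (cases "s \<le> 2 * l")
        case True
        have "c1 * sum (Dist h) Sn \<le> (1/5) * (3 * real s / W)" using DS True by (simp add: c1_def)
        also have "\<dots> \<le> (3/5) * (2 * real l / W)" using True Wpos
          by (simp add: field_simps)
        also have "\<dots> \<le> c2 * sum (Dist h) Bn"
          by (rule mult_mono[OF c2b DB]) (use c2b Wpos in auto)
        finally show ?thesis .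
      next
        case False then show ?thesis using DBn c2b by (simp add: c1_def)
      qed
    qed
    have sumf: "(\<Sum>x\<in>R. Dist h x * f x) = sum (Dist h) R + c1 * sum (Dist h) Sn - c2 * sum (Dist h) Bn"
    proof -
      have "(\<Sum>x\<in>R. Dist h x * f x) = (\<Sum>x\<in>R. Dist h x + (if x \<in> Sn then c1 * Dist h x else 0) - (if x \<in> Bn then c2 * Dist h x else 0))"
        by (rule sum.cong) (auto simp: f_def algebra_simps)
      also have "\<dots> = sum (Dist h) R + (\<Sum>x\<in>R. if x \<in> Sn then c1 * Dist h x else 0) - (\<Sum>x\<in>R. if x \<in> Bn then c2 * Dist h x else 0)"
        by (simp add: sum.distrib sum_subtractf)
      also have "(\<Sum>x\<in>R. if x \<in> Sn then c1 * Dist h x else 0) = c1 * sum (Dist h) Sn"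
        using sum.inter_restrict[OF finR, of "\<lambda>x. c1 * Dist h x" Sn] SnR
        by (simp add: Int_absorb1 sum_distrib_left)
      also have "(\<Sum>x\<in>R. if x \<in> Bn then c2 * Dist h x else 0) = c2 * sum (Dist h) Bn"
        using sum.inter_restrict[OF finR, of "\<lambda>x. c2 * Dist h x" Bn] BnR
        by (simp add: Int_absorb1 sum_distrib_left)
      finally show ?thesis .
    qed
    have "(\<Sum>x\<in>R. Dist h x * Phi (h @ [x])) \<le> (\<Sum>x\<in>R. Dist h x * (G * E * f x))"
      by (rule sum_mono, rule mult_left_mono) (use ptb Dnn in auto)
    also have "\<dots> = G * E * (\<Sum>x\<in>R. Dist h x * f x)"
      by (simp add: sum_distrib_left algebra_simps)
    also have "\<dots> \<le> G * E * 1"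
    proof (rule mult_left_mono)
      show "(\<Sum>x\<in>R. Dist h x * f x) \<le> 1" using sumf key D_sum[OF v ne] by (simp add: R_def)
      show "0 \<le> G * E" using G0 by simp
    qed
    also have "\<dots> = Phi h" using Phih True by (simp add: G_def E_def s_def)
    finally show ?thesis by (simp add: R_def)
  qed
qed

end


context LS begin

lemma Phi_step: assumes v: "valid h" and ne: "rem h \<noteq> {}"
  shows "(\<Sum>x\<in>rem h. Dist h x * Phi (h @ [x])) \<le> Phi h"
proof (cases "reached h l")
  case True
  have "Phi (h @ [x]) = Phi h" for x
    using True reached_snoc[OF True, of x] is_bad_snoc[OF v True, of x] by (simp add: Phi_def)
  then have "(\<Sum>x\<in>rem h. Dist h x * Phi (h @ [x])) = sum (Dist h) (rem h) * Phi h"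
    by (simp add: sum_distrib_right)
  then show ?thesis using D_sum[OF v ne] by simp
next
  case nl: False
  show ?thesis
  proof (cases "reached h (2 * l)")
    case True then show ?thesis using Phi_caseC[OF v ne True nl] by simp
  next
    case False
    have "(\<Sum>x\<in>rem h. Dist h x * Phi (h @ [x])) \<le> (\<Sum>x\<in>rem h. Dist h x * exp (- real l / 40))"
      by (rule sum_mono, rule mult_left_mono) (use Phi_caseB[OF v _ False] D_nn[OF v] in auto)
    also have "\<dots> = exp (- real l / 40)" using D_sum[OF v ne] by (simp add: sum_distrib_right[symmetric])
    also have "\<dots> = Phi h" using nl False by (simp add: Phi_def)
    finally show ?thesis .
  qed
qed

end

theorem lemma4:
  fixes E0 :: "'a set" and eps :: real and w0 :: "'a \<Rightarrow> real"
    and Dist Wt :: "'a list \<Rightarrow> 'a \<Rightarrow> real" and l :: nat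
  assumes "finite E0"
    and "0 < eps" and "eps < 1/2"
    and "\<forall>e\<in>E0. 0 \<le> w0 e"
    and "sum w0 E0 = real (card E0)"
    and "adversary E0 eps w0 Dist Wt"
    and "1 \<le> l" and "l \<le> card {e\<in>E0. w0 e \<le> 2} div 2"
  shows "prob_event E0 Dist (\<lambda>h. is_bad E0 Wt h l) \<le> exp (- real l / 40)"
proof -
  interpret LS E0 eps w0 Dist Wt l using assms by unfold_locales auto
  have v0: "valid_hist E0 []" by (simp add: valid_hist_def)
  have Q: "(\<Sum>t\<in>permutations_of_set (remaining E0 []).
        (\<Prod>i<length t. Dist ([] @ take i t) (t ! i)) * (if is_bad E0 Wt ([] @ t) l then 1 else 0)) \<le> Phi []"
    by (rule Q_bound[OF assms(1) _ _ _ v0]) (use D_nn Phi_step Phi_term in auto)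
  have cr: "complete_runs E0 = permutations_of_set E0"
    by (auto simp: complete_runs_def permutations_of_set_def)
  have "prob_event E0 Dist (\<lambda>h. is_bad E0 Wt h l) =
     (\<Sum>t\<in>permutations_of_set E0. (\<Prod>i<length t. Dist (take i t) (t ! i)) * (if is_bad E0 Wt t l then 1 else 0))"
    unfolding prob_event_def cr path_prob_def
    by (subst sum.inter_filter[OF finite_permutations_of_set]) (auto intro: sum.cong)
  also have "\<dots> \<le> Phi []" using Q by (simp add: remaining_def)
  also have "\<dots> \<le> exp (- real l / 40)" by (rule Phi_init)
  finally show ?thesis .
qed


end
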